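(* Let $p\ge2$ and let $\varphi:\mathbb{R}^n\to\mathbb{R}\cup\{+\infty\}$ be proper and lower semicontinuous. Suppose $\bar x=0$ is a $p$-calm point of $\varphi$ with constant $M>0$, $\varphi(0)=0$, and $\varphi$ is $q$-prox-regular with some $q\ge p$ at $\bar x=0$ for $\bar\zeta=0\in\partial\varphi(0)$ with constants $\varepsilon<\frac12$ and $\rho>0$. Then for each $\gamma\in\big(0,\min\{\frac{2^{1-p}}{Mp},\frac1{\rho2^{2p-3}}\}\big)$ there exists a neighborhood $U\subseteq\mathbb{B}(0;\varepsilon)$ such that $$\|\operatorname{prox}^p_{\gamma\varphi}(x_2)-\operatorname{prox}^p_{\gamma\varphi}(x_1)\|\le L_p\|x_2-x_1\|^{1/q}\quad\forall x_1,x_2\in U,$$ and $\varphi^p_\gamma$ is differentiable on $U$ with $$\|\nabla\varphi^p_\gamma(x_2)-\nabla\varphi^p_\gamma(x_1)\|\le\mathcal{L}_p\|x_2-x_1\|^{1/q}\quad\forall x_1,x_2\in U,$$ where $s=\frac p{p-1}$, $L_p:=\Big(\frac{2(1+\frac{2^p}{\kappa_s})\varepsilon^{p-1}}{\frac1{2^{2p-3}}-\gamma\rho}\Big)^{1/q}$ and $\mathcal{L}_p:=\frac{2(2\varepsilon)^{p-2}}{\gamma\kappa_s}\big((2\varepsilon)^{\frac{q-1}q}+L_p\big)$.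
   Context: $\operatorname{prox}^p_{\gamma\varphi}(x):=\operatorname{argmin}_{y}\big(\varphi(y)+\frac{1}{p\gamma}\|x-y\|^p\big)$, $\varphi^p_\gamma(x):=\inf_y\big(\varphi(y)+\frac{1}{p\gamma}\|x-y\|^p\big)$. $\bar x$ is a $p$-calm point with constant $M>0$ if $\varphi(x)+M\|x-\bar x\|^p>\varphi(\bar x)$ for all $x\neq\bar x$. $\partial$ is the Mordukhovich (limiting) subdifferential. $\varphi$ is $q$-prox-regular ($q\ge2$) at $\bar x$ for $\bar\zeta\in\partial\varphi(\bar x)$ with constants $\varepsilon>0,\rho\ge0$ if $\varphi(x')\ge\varphi(x)+\langle\zeta,x'-x\rangle-\frac\rho2\|x'-x\|^q$ for all $x'\in\mathbb{B}(\bar x;\varepsilon)$, whenever $x\in\mathbb{B}(\bar x;\varepsilon)$, $\zeta\in\partial\varphi(x)\cap\mathbb{B}(\bar\zeta;\varepsilon)$, $\varphi(x)<\varphi(\bar x)+\varepsilon$. The constant $\kappa_t$ ($t\in(1,2]$) is: $\kappa_t=\frac{(2+\sqrt3)(t-1)}{16}$ for $t\in(1,\hat t]$, $\kappa_t=\frac{2+\sqrt3}{16}(1-(3-\sqrt3)^{1-t})$ for $t\in[\hat t,2)$, $\kappa_2=1$, where $\hat t\approx1.3214$ solves $\frac{t(t-1)}2=1-\big[1+\frac{(2-\sqrt3)t}{t-1}\big]^{1-t}$ on $(1,2]$. *)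

theory Defs
  imports "HOL-Analysis.Analysis"
begin

definition proper_fun :: "('a \<Rightarrow> ereal) \<Rightarrow> bool" where
  "proper_fun \<phi> \<longleftrightarrow> (\<forall>x. \<phi> x \<noteq> -\<infinity>) \<and> (\<exists>x. \<phi> x \<noteq> \<infinity>)"

definition lsc_fun :: "('a::topological_space \<Rightarrow> ereal) \<Rightarrow> bool" where
  "lsc_fun \<phi> \<longleftrightarrow> (\<forall>x c. c < \<phi> x \<longrightarrow> eventually (\<lambda>y. c < \<phi> y) (at x))"

definition p_calm :: "real \<Rightarrow> real \<Rightarrow> ('a::real_normed_vector \<Rightarrow> ereal) \<Rightarrow> 'a \<Rightarrow> bool" where
  "p_calm p M \<phi> xb \<longleftrightarrow>
     (\<forall>x. x \<noteq> xb \<longrightarrow> \<phi> x + ereal (M * norm (x - xb) powr p) > \<phi> xb)"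

definition frechet_subdiff :: "('a::real_inner \<Rightarrow> ereal) \<Rightarrow> 'a \<Rightarrow> 'a set" where
  "frechet_subdiff \<phi> x = {\<zeta>. \<bar>\<phi> x\<bar> \<noteq> \<infinity> \<and>
     (\<forall>e>0. \<exists>d>0. \<forall>y. norm (y - x) < d \<longrightarrow>
        \<phi> y \<ge> ereal (real_of_ereal (\<phi> x) + inner \<zeta> (y - x) - e * norm (y - x)))}"

definition lim_subdiff :: "('a::real_inner \<Rightarrow> ereal) \<Rightarrow> 'a \<Rightarrow> 'a set" where
  "lim_subdiff \<phi> x = {\<zeta>. \<exists>xs zs. xs \<longlonglongrightarrow> x \<and> (\<lambda>k. \<phi> (xs k)) \<longlonglongrightarrow> \<phi> x \<and>
       (\<forall>k. zs k \<in> frechet_subdiff \<phi> (xs k)) \<and> zs \<longlonglongrightarrow> \<zeta>}"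

definition q_prox_regular ::
  "real \<Rightarrow> ('a::real_inner \<Rightarrow> ereal) \<Rightarrow> 'a \<Rightarrow> 'a \<Rightarrow> real \<Rightarrow> real \<Rightarrow> bool" where
  "q_prox_regular q \<phi> xb zb eps rho \<longleftrightarrow> q \<ge> 2 \<and> eps > 0 \<and> rho \<ge> 0 \<and>
     (\<forall>x \<zeta>. x \<in> cball xb eps \<and> \<zeta> \<in> lim_subdiff \<phi> x \<inter> cball zb eps \<and> \<phi> x < \<phi> xb + ereal eps \<longrightarrow>
        (\<forall>x' \<in> cball xb eps.
           \<phi> x' \<ge> \<phi> x + ereal (inner \<zeta> (x' - x) - rho / 2 * norm (x' - x) powr q)))"

definition prox :: "real \<Rightarrow> real \<Rightarrow> ('a::real_normed_vector \<Rightarrow> ereal) \<Rightarrow> 'a \<Rightarrow> 'a set" where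
  "prox p \<gamma> \<phi> x = {y. \<forall>z. \<phi> y + ereal (norm (x - y) powr p / (p * \<gamma>))
                          \<le> \<phi> z + ereal (norm (x - z) powr p / (p * \<gamma>))}"

definition moreau_env :: "real \<Rightarrow> real \<Rightarrow> ('a::real_normed_vector \<Rightarrow> ereal) \<Rightarrow> 'a \<Rightarrow> ereal" where
  "moreau_env p \<gamma> \<phi> x = (INF y. \<phi> y + ereal (norm (x - y) powr p / (p * \<gamma>)))"

definition t_hat :: real where
  "t_hat = (THE t. 1 < t \<and> t \<le> 2 \<and>
     t * (t - 1) / 2 = 1 - (1 + (2 - sqrt 3) * t / (t - 1)) powr (1 - t))"

definition kappa :: "real \<Rightarrow> real" where
  "kappa t = (if t = 2 then 1
              else if t \<le> t_hat then (2 + sqrt 3) * (t - 1) / 16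
              else (2 + sqrt 3) / 16 * (1 - (3 - sqrt 3) powr (1 - t)))"

end

theory Submission
  imports Defs
begin


definition Jp :: "real \<Rightarrow> 'a::real_inner \<Rightarrow> 'a" where
  "Jp p w = (norm w powr (p - 2)) *\<^sub>R w"

lemma bern_powr:
  fixes e s :: real
  assumes "e \<ge> 1" "s \<ge> 0"
  shows "1 + e * (s - 1) \<le> s powr e"
proof (cases "e = 1")
  case True then show ?thesis using assms by simp
next
  case False
  hence e1: "e > 1" using assms by simp
  have "s * 1 \<le> s powr e / e + 1 powr (e/(e-1)) / (e/(e-1))"
    by (rule Youngs_inequality) (use e1 assms in \<open>auto simp: field_simps\<close>)
  hence "s \<le> s powr e / e + (e-1)/e" by simp
  hence "e * s \<le> e * (s powr e / e + (e-1)/e)" using e1 by (intro mult_left_mono) auto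
  moreover have "e * (s powr e / e + (e-1)/e) = s powr e + (e - 1)" using e1 by (simp add: distrib_left)
  ultimately have "e * s \<le> s powr e + (e - 1)" by simp
  thus ?thesis by (simp add: algebra_simps)
qed

lemma tangent_ineq:
  fixes w w' :: "'a::real_inner"
  assumes p: "p > 1"
  shows "norm w powr p / p + norm w powr (p - 2) * inner w (w' - w) \<le> norm w' powr p / p"
proof (cases "w = 0")
  case True then show ?thesis using p by simp
next
  case False
  hence nw: "norm w > 0" by simp
  have "inner w w' \<le> norm w * norm w'" by (rule norm_cauchy_schwarz)
  hence "inner w (w' - w) \<le> norm w * norm w' - norm w ^ 2"
    by (simp add: inner_diff_right power2_norm_eq_inner)
  hence "norm w powr (p - 2) * inner w (w' - w) \<le> norm w powr (p - 2) * (norm w * norm w' - norm w ^ 2)"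
    by (rule mult_left_mono) simp
  also have "\<dots> = norm w powr (p - 1) * norm w' - norm w powr p"
  proof -
    have a: "norm w powr (p - 2) * norm w = norm w powr (p - 1)"
    proof -
      have "norm w powr (p - 1) = norm w powr ((p - 2) + 1)" by simp
      also have "\<dots> = norm w powr (p - 2) * norm w powr 1" by (rule powr_add)
      also have "\<dots> = norm w powr (p - 2) * norm w" by simp
      finally show ?thesis by simp
    qed
    have b: "norm w powr (p - 2) * norm w ^ 2 = norm w powr p"
    proof -
      have "norm w powr p = norm w powr ((p - 2) + 2)" by simp
      also have "\<dots> = norm w powr (p - 2) * norm w powr 2" by (rule powr_add)
      also have "\<dots> = norm w powr (p - 2) * norm w ^ 2" using nw by (simp add: powr_numeral)
      finally show ?thesis by simp
    qed
    show ?thesis using a b by (simp add: algebra_simps)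
  qed
  finally have 1: "norm w powr (p - 2) * inner w (w' - w) \<le> norm w powr (p - 1) * norm w' - norm w powr p" .
  have "norm w' * norm w powr (p - 1) \<le> norm w' powr p / p + (norm w powr (p - 1)) powr (p/(p-1)) / (p/(p-1))"
    by (rule Youngs_inequality) (use p in \<open>auto simp: field_simps\<close>)
  also have "(norm w powr (p - 1)) powr (p/(p-1)) = norm w powr p"
    using p by (simp add: powr_powr)
  finally have 2: "norm w' * norm w powr (p - 1) \<le> norm w' powr p / p + norm w powr p * (p-1) / p"
    by simp
  have "norm w powr p / p + (norm w powr (p - 1) * norm w' - norm w powr p) \<le> norm w' powr p / p"
  proof -
    have "norm w powr p * (p-1) / p = norm w powr p - norm w powr p / p" using p by (simp add: field_simps)
    thus ?thesis using 2 by (simp add: mult.commute)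
  qed
  with 1 show ?thesis by linarith
qed

lemma Jmono:
  fixes a b :: "'a::real_inner"
  assumes p: "p \<ge> 2"
  shows "(norm a powr (p-2) + norm b powr (p-2)) / 2 * norm (b - a) ^ 2 \<le> inner (Jp p b - Jp p a) (b - a)"
proof -
  define u where "u = norm a powr (p-2)"
  define v where "v = norm b powr (p-2)"
  have id: "inner (Jp p b - Jp p a) (b - a) = (u + v) / 2 * norm (b - a) ^ 2 + (v - u) * (norm b ^ 2 - norm a ^ 2) / 2"
    unfolding Jp_def u_def[symmetric] v_def[symmetric]
    by (simp add: inner_diff_left inner_diff_right power2_norm_eq_inner algebra_simps inner_commute add_divide_distrib diff_divide_distrib)
  have "0 \<le> (v - u) * (norm b ^ 2 - norm a ^ 2)"
  proof (cases "norm a \<le> norm b")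
    case True
    hence "u \<le> v" unfolding u_def v_def using p by (intro powr_mono2) auto
    moreover have "norm a ^ 2 \<le> norm b ^ 2" using True by (intro power_mono) auto
    ultimately show ?thesis by simp
  next
    case False
    hence "v \<le> u" unfolding u_def v_def using p by (intro powr_mono2) auto
    moreover have "norm b ^ 2 \<le> norm a ^ 2" using False by (intro power_mono) auto
    ultimately show ?thesis by (simp add: mult_nonpos_nonpos)
  qed
  thus ?thesis using id u_def v_def by simp
qed

lemma Jlip_aux:
  fixes a b :: "'a::real_normed_vector"
  assumes p: "p \<ge> 2" and ab: "norm a \<le> norm b" and bR: "norm b \<le> R"
  shows "norm ((norm b powr (p - 2)) *\<^sub>R b - (norm a powr (p - 2)) *\<^sub>R a) \<le> (p - 1) * R powr (p - 2) * norm (b - a)"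
proof -
  define r where "r = p - 2"
  define u where "u = norm a powr r"
  define v where "v = norm b powr r"
  have r0: "r \<ge> 0" using p r_def by simp
  have uv: "u \<le> v" unfolding u_def v_def using r0 ab by (intro powr_mono2) auto
  have v0: "v \<ge> 0" unfolding v_def by simp
  have vR: "v \<le> R powr r" unfolding v_def using r0 bR by (intro powr_mono2) auto
  have eq: "v *\<^sub>R b - u *\<^sub>R a = v *\<^sub>R (b - a) + (v - u) *\<^sub>R a"
    by (simp add: algebra_simps)
  have key: "(v - u) * norm a \<le> r * v * (norm b - norm a)"
  proof (cases "a = 0")
    case True then show ?thesis using r0 v0 ab by simp
  next
    case False
    hence na: "norm a > 0" by simp
    hence nb: "norm b > 0" using ab by linarith
    have "1 + (1 + r) * (norm a / norm b - 1) \<le> (norm a / norm b) powr (1 + r)"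
      by (rule bern_powr) (use r0 na nb in auto)
    also have "\<dots> = norm a powr (1 + r) / norm b powr (1 + r)"
      using na nb by (simp add: powr_divide)
    finally have 1: "1 + (1 + r) * (norm a / norm b - 1) \<le> norm a powr (1 + r) / norm b powr (1 + r)" .
    have ea: "norm a powr (1 + r) = norm a * u" unfolding u_def using na by (simp add: powr_add)
    have eb: "norm b powr (1 + r) = norm b * v" unfolding v_def using nb by (simp add: powr_add)
    have vpos: "v > 0" unfolding v_def using nb by simp
    from 1 have "(1 + (1 + r) * (norm a / norm b - 1)) * (norm b * v) \<le> norm a * u"
      using ea eb nb vpos by (simp add: pos_le_divide_eq)
    moreover have "(1 + (1 + r) * (norm a / norm b - 1)) * (norm b * v) = norm b * v + (1 + r) * (norm a * v - norm b * v)"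
      using nb by (simp add: field_simps)
    ultimately have "norm b * v + (1 + r) * (norm a * v - norm b * v) \<le> norm a * u"
      by simp
    thus ?thesis by (simp add: algebra_simps)
  qed
  have tri: "norm b - norm a \<le> norm (b - a)" by (rule norm_triangle_ineq2)
  have "norm (v *\<^sub>R b - u *\<^sub>R a) \<le> norm (v *\<^sub>R (b - a)) + norm ((v - u) *\<^sub>R a)"
    unfolding eq by (rule norm_triangle_ineq)
  also have "\<dots> = v * norm (b - a) + (v - u) * norm a" using v0 uv by simp
  also have "\<dots> \<le> v * norm (b - a) + r * v * norm (b - a)"
    using key tri mult_left_mono[OF tri, of "r * v"] r0 v0 by simp
  also have "\<dots> = (1 + r) * v * norm (b - a)" by (simp add: algebra_simps)
  also have "\<dots> \<le> (1 + r) * R powr r * norm (b - a)"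
    using vR r0 by (intro mult_right_mono mult_left_mono) auto
  finally show ?thesis unfolding u_def v_def r_def by simp
qed

lemma Jlip:
  fixes a b :: "'a::real_inner"
  assumes p: "p \<ge> 2" and aR: "norm a \<le> R" and bR: "norm b \<le> R"
  shows "norm (Jp p b - Jp p a) \<le> (p - 1) * R powr (p - 2) * norm (b - a)"
proof (cases "norm a \<le> norm b")
  case True then show ?thesis unfolding Jp_def using Jlip_aux[OF p True bR] by simp
next
  case False
  hence "norm b \<le> norm a" by simp
  from Jlip_aux[OF p this aR] show ?thesis unfolding Jp_def by (simp add: norm_minus_commute)
qed

lemma lsc_open_superlevel:
  fixes G :: "'a::topological_space \<Rightarrow> ereal"
  assumes lsc: "\<And>x c. c < G x \<Longrightarrow> eventually (\<lambda>y. c < G y) (at x)"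
  shows "open {w. c < G w}"
proof (subst open_subopen, intro ballI)
  fix x assume "x \<in> {w. c < G w}"
  hence cx: "c < G x" by simp
  from lsc[OF cx] obtain T where T: "open T" "x \<in> T" "\<forall>y\<in>T. y \<noteq> x \<longrightarrow> c < G y"
    unfolding eventually_at_topological by blast
  show "\<exists>T. open T \<and> x \<in> T \<and> T \<subseteq> {w. c < G w}"
    using T cx by (intro exI[of _ T]) auto
qed

lemma lsc_min_compact:
  fixes G :: "'a::topological_space \<Rightarrow> ereal"
  assumes lsc: "\<And>x c. c < G x \<Longrightarrow> eventually (\<lambda>y. c < G y) (at x)"
    and S: "compact S" "S \<noteq> {}"
  shows "\<exists>y\<in>S. \<forall>z\<in>S. G y \<le> G z"
proof (rule ccontr)
  assume "\<not> ?thesis"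
  hence "\<forall>y\<in>S. \<exists>z\<in>S. G z < G y" by (auto simp: not_le)
  then obtain zf where zf: "\<And>y. y \<in> S \<Longrightarrow> zf y \<in> S \<and> G (zf y) < G y" by metis
  have cover: "S \<subseteq> (\<Union>y\<in>S. {w. G (zf y) < G w})" using zf by blast
  obtain C' where C': "C' \<subseteq> S" "finite C'" "S \<subseteq> (\<Union>y\<in>C'. {w. G (zf y) < G w})"
    by (rule compactE_image[OF S(1) _ cover]) (use lsc_open_superlevel[OF lsc] in auto)
  have ne: "C' \<noteq> {}" using C'(3) S(2) by auto
  define m where "m = Min ((\<lambda>y. G (zf y)) ` C')"
  have "m \<in> (\<lambda>y. G (zf y)) ` C'" unfolding m_def using C'(2) ne by (intro Min_in) auto
  then obtain ys where ys: "ys \<in> C'" "m = G (zf ys)" by auto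
  have "zf ys \<in> S" using zf ys C'(1) by auto
  then obtain yk where yk: "yk \<in> C'" "G (zf yk) < G (zf ys)" using C'(3) by blast
  have "m \<le> G (zf yk)" unfolding m_def using C'(2) yk(1) by (intro Min_le) auto
  thus False using yk ys by simp
qed

lemma lsc_add_cont:
  fixes \<phi> :: "'a::metric_space \<Rightarrow> ereal"
  assumes lsc: "\<And>x c. c < \<phi> x \<Longrightarrow> eventually (\<lambda>y. c < \<phi> y) (at x)"
    and ninf: "\<And>x. \<phi> x \<noteq> -\<infinity>"
    and cont: "continuous_on UNIV r"
    and c: "c < \<phi> x + ereal (r x)"
  shows "eventually (\<lambda>y. c < \<phi> y + ereal (r y)) (at x)"
proof (cases c)
  case MInf
  have "\<forall>y. c < \<phi> y + ereal (r y)"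
  proof
    fix y show "c < \<phi> y + ereal (r y)" using ninf[of y] MInf by (cases "\<phi> y") auto
  qed
  then show ?thesis by (intro always_eventually)
next
  case PInf
  then show ?thesis using c by simp
next
  case (real c0)
  have "ereal (c0 - r x) < \<phi> x" using c real
    by (cases "\<phi> x") auto
  then obtain d where d: "ereal (c0 - r x) < ereal d" "ereal d < \<phi> x" using ereal_dense2 by blast
  have ev1: "eventually (\<lambda>y. ereal d < \<phi> y) (at x)" using lsc[OF d(2)] .
  have "(r \<longlongrightarrow> r x) (at x)" using cont by (meson UNIV_I continuous_on_def tendsto_within_open open_UNIV)
  hence ev2: "eventually (\<lambda>y. dist (r y) (r x) < d - (c0 - r x)) (at x)"
    using d(1) by (intro tendstoD) auto
  show ?thesis
  proof (rule eventually_mono[OF eventually_conj[OF ev1 ev2]])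
    fix y assume "ereal d < \<phi> y \<and> dist (r y) (r x) < d - (c0 - r x)"
    hence h1: "ereal d < \<phi> y" and h2: "dist (r y) (r x) < d - (c0 - r x)" by auto
    have "c0 < d + r y" using h2 by (auto simp: dist_real_def)
    thus "c < \<phi> y + ereal (r y)" using h1 real by (cases "\<phi> y") auto
  qed
qed

lemma eventually_small:
  fixes C r B :: real
  assumes "0 \<le> C" "0 < r" "0 < B"
  shows "eventually (\<lambda>d. C * d powr r < B) (at_right 0)"
proof -
  have "((\<lambda>d::real. d powr r) \<longlongrightarrow> 0) (at_right 0)"
    by (rule tendsto_zero_powrI) (auto intro: tendsto_ident_at eventually_at_rightI[of 0 1] simp: assms)
  hence "((\<lambda>d::real. C * d powr r) \<longlongrightarrow> C * 0) (at_right 0)" by (intro tendsto_mult tendsto_const)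
  thus ?thesis using assms by (intro order_tendstoD(2)) auto
qed

lemma deriv_quadratic:
  fixes f :: "'a::real_inner \<Rightarrow> real"
  assumes r0: "r0 > 0" and C: "C \<ge> 0"
    and bnd: "\<And>z. norm (z - x) < r0 \<Longrightarrow> \<bar>f z - f x - inner (z - x) g\<bar> \<le> C * norm (z - x) ^ 2"
  shows "GDERIV f x :> g"
  unfolding gderiv_def has_derivative_at'
proof (intro conjI allI impI)
  show "bounded_linear (\<lambda>h. inner h g)" by (rule bounded_linear_inner_left)
  fix e :: real assume e: "e > 0"
  show "\<exists>d>0. \<forall>x'. 0 < norm (x' - x) \<and> norm (x' - x) < d \<longrightarrow> norm (f x' - f x - inner (x' - x) g) / norm (x' - x) < e"
  proof (intro exI[of _ "min r0 (e / (C + 1))"] conjI allI impI)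
    show "0 < min r0 (e / (C + 1))" using r0 e C by auto
    fix z assume z: "0 < norm (z - x) \<and> norm (z - x) < min r0 (e / (C + 1))"
    have "norm (f z - f x - inner (z - x) g) \<le> C * norm (z - x) ^ 2" using bnd z by simp
    hence "norm (f z - f x - inner (z - x) g) / norm (z - x) \<le> C * norm (z - x)"
      using z by (simp add: divide_le_eq power2_eq_square mult.assoc)
    also have "\<dots> \<le> C * (e / (C + 1))" using z C by (intro mult_left_mono) auto
    also have "\<dots> < e" using C e by (simp add: field_simps)
    finally show "norm (f z - f x - inner (z - x) g) / norm (z - x) < e" .
  qed
qed

lemma holder_finish:
  fixes Y K X D L q :: real
  assumes "Y \<le> K * X" "0 \<le> K" "0 \<le> X" "X \<le> D" "K * D powr (1 - 1/q) \<le> L" "q > 1"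
  shows "Y \<le> L * X powr (1/q)"
proof (cases "X = 0")
  case True then show ?thesis using assms by simp
next
  case False
  hence X: "X > 0" using assms by simp
  have "X = X powr (1 - 1/q) * X powr (1/q)" using X by (simp add: powr_add[symmetric])
  hence "Y \<le> K * X powr (1 - 1/q) * X powr (1/q)" using assms(1) by (metis mult.assoc)
  also have "\<dots> \<le> K * D powr (1 - 1/q) * X powr (1/q)"
    using assms X by (intro mult_right_mono mult_left_mono powr_mono2) auto
  also have "\<dots> \<le> L * X powr (1/q)" using assms by (intro mult_right_mono) auto
  finally show ?thesis .
qed

lemma holder_core:
  fixes p q c :: real
  assumes p: "p \<ge> 2" and q: "q \<ge> p" and c: "c > 0" and mu: "c * 2 powr (p-1) < 1"
  shows "\<exists>K2\<ge>0. \<forall>(a::'a::real_inner) b dx dy. norm a \<le> 1/2 \<longrightarrow> norm b \<le> 1/2 \<longrightarrow> dy = dx - (b - a) \<longrightarrow>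
            inner (Jp p b - Jp p a) dy \<ge> - (c * norm dy powr q) \<longrightarrow> norm (b - a) \<le> K2 * norm dx"
proof -
  define \<mu> where "\<mu> = c * 2 powr (p-1)"
  have mu0: "0 < \<mu>" "\<mu> < 1" using c mu unfolding \<mu>_def by auto
  define \<tau> where "\<tau> = (1/\<mu>) powr (1/(2*q))"
  have q0: "q > 0" using p q by simp
  have tau1: "\<tau> > 1" unfolding \<tau>_def using mu0 q0 by (intro gr_one_powr) auto
  have "\<tau> powr q = (1/\<mu>) powr (1/2)" unfolding \<tau>_def using q0 by (simp add: powr_powr)
  also have "\<dots> < (1/\<mu>) powr 1" using mu0 by (intro powr_less_mono) auto
  finally have tq: "\<tau> powr q < 1/\<mu>" using mu0 by simp
  define lam where "lam = \<mu> * \<tau> powr q"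
  have lam: "0 < lam" "lam < 1" unfolding lam_def using mu0 tq tau1 by (auto simp: field_simps)
  define K2 where "K2 = 1/(\<tau> - 1) + 2*(p-1)/(1-lam)"
  have K20: "K2 \<ge> 0" unfolding K2_def using tau1 lam p by auto
  show ?thesis
  proof (intro exI[of _ K2] conjI K20 allI impI)
    fix a b dx dy :: 'a
    assume a: "norm a \<le> 1/2" and b: "norm b \<le> 1/2" and dy: "dy = dx - (b - a)"
      and mon: "inner (Jp p b - Jp p a) dy \<ge> - (c * norm dy powr q)"
    define n where "n = norm (b - a)"
    show "norm (b - a) \<le> K2 * norm dx"
    proof (cases "norm dx \<ge> (\<tau> - 1) * n")
      case True
      hence "n \<le> norm dx / (\<tau> - 1)" using tau1 by (simp add: field_simps)
      also have "\<dots> \<le> K2 * norm dx"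
      proof -
        have "1/(\<tau> - 1) \<le> K2" unfolding K2_def using lam p by auto
        hence "1/(\<tau> - 1) * norm dx \<le> K2 * norm dx" by (intro mult_right_mono) auto
        thus ?thesis by simp
      qed
      finally show ?thesis unfolding n_def .
    next
      case False
      hence dxl: "norm dx < (\<tau> - 1) * n" by simp
      have n0: "n > 0" using dxl tau1 by (smt (verit) mult_nonneg_nonpos norm_ge_zero)
      define R where "R = max (norm a) (norm b)"
      have aR: "norm a \<le> R" and bR: "norm b \<le> R" unfolding R_def by auto
      have nR: "n \<le> 2 * R" unfolding n_def using norm_triangle_ineq4[of b a] aR bR by linarith
      have R0: "R > 0" using nR n0 by linarith
      have n1: "n \<le> 1" unfolding n_def using norm_triangle_ineq4[of b a] a b by linarith
      define P where "P = R powr (p - 2)"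
      have P0: "P > 0" unfolding P_def using R0 by simp
      have "norm dy \<le> norm dx + n" unfolding dy n_def by (rule norm_triangle_ineq4)
      hence ndy: "norm dy \<le> \<tau> * n" using dxl by (simp add: algebra_simps)
      have "norm dy powr q \<le> (\<tau> * n) powr q" using ndy q0 by (intro powr_mono2) auto
      also have "\<dots> = \<tau> powr q * n powr q" by (rule powr_mult)
      also have "\<dots> \<le> \<tau> powr q * n powr p" using n0 n1 q by (intro mult_left_mono powr_mono') auto
      also have "n powr p = n powr (p - 2) * n ^ 2"
      proof -
        have "n powr p = n powr ((p - 2) + 2)" by simp
        also have "\<dots> = n powr (p - 2) * n powr 2" by (rule powr_add)
        finally show ?thesis using n0 by (simp add: powr_numeral)
      qed
      also have "n powr (p - 2) \<le> (2 * R) powr (p - 2)" using nR n0 p by (intro powr_mono2) auto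
      hence "\<tau> powr q * (n powr (p - 2) * n ^ 2) \<le> \<tau> powr q * ((2 * R) powr (p - 2) * n ^ 2)"
        by (intro mult_left_mono mult_right_mono) auto
      also have "(2 * R) powr (p - 2) = 2 powr (p - 2) * P" unfolding P_def by (rule powr_mult)
      finally have dyq: "norm dy powr q \<le> \<tau> powr q * (2 powr (p - 2) * P * n ^ 2)" .
      have two: "2 powr (p - 1) = 2 * 2 powr (p - 2)"
      proof -
        have "2 powr (p - 1) = (2::real) powr ((p - 2) + 1)" by simp
        also have "\<dots> = 2 powr (p - 2) * 2 powr 1" by (rule powr_add)
        finally show ?thesis by simp
      qed
      have "c * norm dy powr q \<le> c * (\<tau> powr q * (2 powr (p - 2) * P * n ^ 2))"
        using dyq c by (intro mult_left_mono) auto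
      also have "\<dots> = lam / 2 * P * n ^ 2" unfolding lam_def \<mu>_def two by simp
      finally have cq: "c * norm dy powr q \<le> lam / 2 * P * n ^ 2" .
      have mP: "P / 2 \<le> (norm a powr (p-2) + norm b powr (p-2)) / 2"
        unfolding P_def R_def by (cases "norm a \<le> norm b") (auto simp: max_def)
      have "P / 2 * n ^ 2 \<le> (norm a powr (p-2) + norm b powr (p-2)) / 2 * n ^ 2"
        using mP by (intro mult_right_mono) auto
      also have "\<dots> \<le> inner (Jp p b - Jp p a) (b - a)" unfolding n_def by (rule Jmono[OF p])
      also have "\<dots> = inner (Jp p b - Jp p a) dx - inner (Jp p b - Jp p a) dy"
        using dy by (simp add: inner_diff_right)
      also have "\<dots> \<le> norm (Jp p b - Jp p a) * norm dx + c * norm dy powr q"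
        using mon norm_cauchy_schwarz[of "Jp p b - Jp p a" dx] by linarith
      also have "norm (Jp p b - Jp p a) \<le> (p - 1) * P * n" unfolding P_def n_def by (rule Jlip[OF p aR bR])
      hence "norm (Jp p b - Jp p a) * norm dx \<le> (p - 1) * P * n * norm dx" by (intro mult_right_mono) auto
      finally have main: "P / 2 * n ^ 2 \<le> (p - 1) * P * n * norm dx + lam / 2 * P * n ^ 2"
        using cq by linarith
      have "(P * n) * ((1 - lam) / 2 * n) \<le> (P * n) * ((p - 1) * norm dx)"
      proof -
        have e1: "(P * n) * ((1 - lam) / 2 * n) = P / 2 * n ^ 2 - lam / 2 * P * n ^ 2"
          by (simp add: field_simps power2_eq_square)
        have e2: "(P * n) * ((p - 1) * norm dx) = (p - 1) * P * n * norm dx" by simp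
        show ?thesis unfolding e1 e2 using main by linarith
      qed
      hence "(1 - lam) / 2 * n \<le> (p - 1) * norm dx" using P0 n0 by (simp add: mult_le_cancel_left_pos)
      hence "n \<le> 2 * (p - 1) / (1 - lam) * norm dx" using lam by (simp add: field_simps)
      also have "\<dots> \<le> K2 * norm dx" unfolding K2_def using tau1 by (intro mult_right_mono) auto
      finally show ?thesis unfolding n_def .
    qed
  qed
qed


lemma kappa_pos: assumes "1 < s" "s \<le> 2" shows "kappa s > 0"
proof -
  have "sqrt 3 < sqrt 4" by (simp only: real_sqrt_less_iff)
  hence s3: "sqrt 3 < 2" by (simp add: real_sqrt_four)
  have "(3 - sqrt 3) powr (1 - s) < 1" using s3 assms by (intro powr_less_one) auto
  moreover have "0 < 2 + sqrt 3" by (smt (verit) real_sqrt_ge_zero)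
  ultimately show ?thesis using assms unfolding kappa_def by (auto intro!: mult_pos_pos)
qed


lemma norm_Jp: "norm (Jp p w) = norm w powr (p - 1)"
proof (cases "w = 0")
  case True then show ?thesis by (simp add: Jp_def)
next
  case False
  hence "norm w powr (p - 1) = norm w powr ((p - 2) + 1)" by simp
  also have "\<dots> = norm w powr (p - 2) * norm w powr 1" by (rule powr_add)
  finally show ?thesis using False by (simp add: Jp_def)
qed

lemma inner_Jp: "inner (Jp p w) v = norm w powr (p - 2) * inner w v"
  by (simp add: Jp_def)

lemma main_lemma:
  fixes \<phi> :: "'a::euclidean_space \<Rightarrow> ereal" and p q M eps rho \<gamma> Lp LLp :: real
  assumes hp: "p \<ge> 2" and hproper: "proper_fun \<phi>" and hlsc: "lsc_fun \<phi>" and hM: "M > 0"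
    and hcalm: "p_calm p M \<phi> 0" and h0: "\<phi> 0 = 0" and hq: "q \<ge> p"
    and hreg: "q_prox_regular q \<phi> 0 0 eps rho" and hrho: "rho > 0"
    and hg: "0 < \<gamma>" and hg1: "\<gamma> < 2 powr (1 - p) / (M * p)"
    and hg2: "\<gamma> < 1 / (rho * 2 powr (2 * p - 3))"
    and hLp: "Lp > 0" and hLLp: "LLp > 0"
  shows "\<exists>U. open U \<and> 0 \<in> U \<and> U \<subseteq> cball 0 eps \<and>
          (\<forall>x\<in>U. prox p \<gamma> \<phi> x \<noteq> {}) \<and>
          (\<forall>x1\<in>U. \<forall>x2\<in>U. \<forall>y1\<in>prox p \<gamma> \<phi> x1. \<forall>y2\<in>prox p \<gamma> \<phi> x2.
              norm (y2 - y1) \<le> Lp * norm (x2 - x1) powr (1 / q)) \<and>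
          (\<forall>x\<in>U. \<bar>moreau_env p \<gamma> \<phi> x\<bar> \<noteq> \<infinity>) \<and>
          (\<exists>g. (\<forall>x\<in>U. GDERIV (\<lambda>z. real_of_ereal (moreau_env p \<gamma> \<phi> z)) x :> g x) \<and>
               (\<forall>x1\<in>U. \<forall>x2\<in>U. norm (g x2 - g x1) \<le> LLp * norm (x2 - x1) powr (1 / q)))"
proof -
  have p1: "p > 1" and p0: "p > 0" using hp by auto
  have q1: "q > 1" and q0: "q > 0" using hp hq by auto
  have eps0: "eps > 0" using hreg unfolding q_prox_regular_def by simp
  have regI: "\<And>x \<zeta> x'. x \<in> cball 0 eps \<Longrightarrow> \<zeta> \<in> lim_subdiff \<phi> x \<Longrightarrow> \<zeta> \<in> cball 0 eps \<Longrightarrow>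
      \<phi> x < \<phi> 0 + ereal eps \<Longrightarrow> x' \<in> cball 0 eps \<Longrightarrow>
      \<phi> x' \<ge> \<phi> x + ereal (inner \<zeta> (x' - x) - rho / 2 * norm (x' - x) powr q)"
    using hreg unfolding q_prox_regular_def by blast
  have ninf: "\<And>y. \<phi> y \<noteq> -\<infinity>" using hproper unfolding proper_fun_def by blast
  have lsc: "\<And>x c. c < \<phi> x \<Longrightarrow> eventually (\<lambda>y. c < \<phi> y) (at x)"
    using hlsc unfolding lsc_fun_def by blast
  define hh where "hh w = norm w powr p / (p * \<gamma>)" for w :: 'a
  have hh0: "\<And>w. hh w \<ge> 0" unfolding hh_def using hg p0 by simp
  have prox_iff: "\<And>x y. y \<in> prox p \<gamma> \<phi> x \<longleftrightarrow> (\<forall>z. \<phi> y + ereal (hh (x - y)) \<le> \<phi> z + ereal (hh (x - z)))"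
    by (simp add: prox_def hh_def)
  have calm: "\<And>y. ereal (- M * norm y powr p) \<le> \<phi> y"
  proof -
    fix y :: 'a
    show "ereal (- M * norm y powr p) \<le> \<phi> y"
    proof (cases "y = 0")
      case True then show ?thesis using h0 by simp
    next
      case False
      hence "\<phi> y + ereal (M * norm y powr p) > 0" using hcalm h0 unfolding p_calm_def by auto
      thus ?thesis using ninf[of y] by (cases "\<phi> y") auto
    qed
  qed
  have Mp: "M * 2 powr (p - 1) * (p * \<gamma>) < 1"
  proof -
    have "\<gamma> * (M * p) < 2 powr (1 - p)" using hg1 hM p0 by (simp add: field_simps)
    hence "\<gamma> * (M * p) * 2 powr (p - 1) < 2 powr (1 - p) * 2 powr (p - 1)"
      by (intro mult_strict_right_mono) auto
    also have "2 powr (1 - p) * 2 powr (p - 1) = (1::real)" by (simp add: powr_add[symmetric])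
    finally show ?thesis by (simp add: algebra_simps)
  qed
  define c1 where "c1 = 1 / (p * \<gamma>) - M * 2 powr (p - 1)"
  have c1: "c1 > 0" unfolding c1_def using Mp hg p0 by (simp add: field_simps)
  define t where "t = (2::real) powr ((p - 1) / p)"
  have t1: "t > 1" unfolding t_def using p1 by (intro gr_one_powr) auto
  have tp: "t powr p = 2 powr (p - 1)" unfolding t_def using p0 by (simp add: powr_powr)
  have Fbound: "\<And>x z. norm x \<le> (t - 1) * norm (x - z) \<Longrightarrow> ereal (c1 * norm (x - z) powr p) \<le> \<phi> z + ereal (hh (x - z))"
  proof -
    fix x z :: 'a assume a: "norm x \<le> (t - 1) * norm (x - z)"
    have "norm z \<le> norm (x - z) + norm x" using norm_triangle_ineq4[of x "x - z"] by simp
    hence nz: "norm z \<le> t * norm (x - z)" using a by (simp add: algebra_simps)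
    have "norm z powr p \<le> (t * norm (x - z)) powr p" using nz p0 by (intro powr_mono2) auto
    also have "\<dots> = 2 powr (p - 1) * norm (x - z) powr p" by (simp add: powr_mult tp)
    finally have "- M * norm z powr p \<ge> - M * (2 powr (p - 1) * norm (x - z) powr p)" using hM by simp
    hence "c1 * norm (x - z) powr p \<le> - M * norm z powr p + hh (x - z)"
      unfolding c1_def hh_def by (simp add: algebra_simps diff_divide_distrib)
    hence "ereal (c1 * norm (x - z) powr p) \<le> ereal (- M * norm z powr p) + ereal (hh (x - z))" by simp
    also have "\<dots> \<le> \<phi> z + ereal (hh (x - z))" using calm[of z] by (intro add_right_mono)
    finally show "ereal (c1 * norm (x - z) powr p) \<le> \<phi> z + ereal (hh (x - z))" .
  qed
  define K1 where "K1 = 1 / (t - 1) + (1 / (p * \<gamma>) / c1) powr (1 / p) + 1"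
  have K1: "K1 \<ge> 1" unfolding K1_def using t1 by simp
  have F0: "\<And>x. \<phi> 0 + ereal (hh (x - 0)) = ereal (norm x powr p / (p * \<gamma>))" using h0 by (simp add: hh_def)
  have Fout: "\<And>x z. K1 * norm x < norm (x - z) \<Longrightarrow> \<phi> 0 + ereal (hh (x - 0)) < \<phi> z + ereal (hh (x - z))"
  proof -
    fix x z :: 'a assume a: "K1 * norm x < norm (x - z)"
    have "(t - 1) * K1 \<ge> (t - 1) * (1 / (t - 1))" unfolding K1_def using t1 by (intro mult_left_mono) auto
    hence "(t - 1) * K1 \<ge> 1" using t1 by simp
    hence "norm x \<le> (t - 1) * K1 * norm x" using mult_right_mono[OF _ norm_ge_zero[of x], of 1] by simp
    also have "\<dots> \<le> (t - 1) * norm (x - z)" using a t1 by (simp add: mult.assoc)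
    finally have b: "ereal (c1 * norm (x - z) powr p) \<le> \<phi> z + ereal (hh (x - z))" by (rule Fbound)
    define B where "B = 1 / (p * \<gamma>) / c1"
    have B0: "B > 0" unfolding B_def using c1 hg p0 by simp
    have "K1 \<ge> B powr (1 / p)" unfolding K1_def B_def using t1 by simp
    hence "K1 powr p \<ge> (B powr (1 / p)) powr p" using p0 by (intro powr_mono2) auto
    also have "(B powr (1 / p)) powr p = B" using B0 p0 by (simp add: powr_powr)
    finally have "c1 * B \<le> c1 * K1 powr p" using c1 by (intro mult_left_mono) auto
    moreover have "c1 * B = 1 / (p * \<gamma>)" unfolding B_def using c1 by simp
    ultimately have K1B: "c1 * K1 powr p \<ge> 1 / (p * \<gamma>)" by simp
    have "norm x powr p / (p * \<gamma>) = 1 / (p * \<gamma>) * norm x powr p" by simp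
    also have "\<dots> \<le> c1 * K1 powr p * norm x powr p" using K1B by (intro mult_right_mono) auto
    also have "\<dots> = c1 * (K1 * norm x) powr p" using K1 by (simp add: powr_mult)
    also have "\<dots> < c1 * norm (x - z) powr p" using a c1 p0 K1 by (intro mult_strict_left_mono powr_less_mono2) auto
    finally have "ereal (norm x powr p / (p * \<gamma>)) < ereal (c1 * norm (x - z) powr p)" by simp
    hence "ereal (norm x powr p / (p * \<gamma>)) < \<phi> z + ereal (hh (x - z))" using b by (rule less_le_trans)
    with F0[of x] show "\<phi> 0 + ereal (hh (x - 0)) < \<phi> z + ereal (hh (x - z))" by simp
  qed
  have hhcont: "\<And>x. continuous_on UNIV (\<lambda>y. hh (x - y))"
    unfolding hh_def using p0 hg
    by (intro continuous_on_divide continuous_on_const continuous_on_powr' continuous_on_norm continuous_on_diff continuous_on_id) auto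
  have exist: "\<And>x. \<exists>y. y \<in> prox p \<gamma> \<phi> x"
  proof -
    fix x :: 'a
    define S where "S = cball x (K1 * norm x)"
    have "K1 * norm x \<ge> 0" using K1 by simp
    hence S: "compact S" "S \<noteq> {}" unfolding S_def by auto
    have lscF: "\<And>w c. c < \<phi> w + ereal (hh (x - w)) \<Longrightarrow> eventually (\<lambda>y. c < \<phi> y + ereal (hh (x - y))) (at w)"
      by (rule lsc_add_cont[OF lsc ninf hhcont])
    obtain y where y: "y \<in> S" "\<And>z. z \<in> S \<Longrightarrow> \<phi> y + ereal (hh (x - y)) \<le> \<phi> z + ereal (hh (x - z))"
      using lsc_min_compact[where G = "\<lambda>y. \<phi> y + ereal (hh (x - y))", OF lscF S] by blast
    have "0 \<in> S" unfolding S_def using K1 by (simp add: mult_le_cancel_right1)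
    hence y0: "\<phi> y + ereal (hh (x - y)) \<le> \<phi> 0 + ereal (hh (x - 0))" using y(2) by blast
    have "\<forall>z. \<phi> y + ereal (hh (x - y)) \<le> \<phi> z + ereal (hh (x - z))"
    proof
      fix z show "\<phi> y + ereal (hh (x - y)) \<le> \<phi> z + ereal (hh (x - z))"
      proof (cases "z \<in> S")
        case True then show ?thesis using y(2) by blast
      next
        case False
        hence "K1 * norm x < norm (x - z)" unfolding S_def by (simp add: dist_norm)
        from Fout[OF this] y0 show ?thesis by simp
      qed
    qed
    thus "\<exists>y. y \<in> prox p \<gamma> \<phi> x" using prox_iff by blast
  qed
  have loc: "\<And>x y. y \<in> prox p \<gamma> \<phi> x \<Longrightarrow> norm (x - y) \<le> K1 * norm x"
  proof (rule ccontr)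
    fix x y assume y: "y \<in> prox p \<gamma> \<phi> x" and n: "\<not> norm (x - y) \<le> K1 * norm x"
    from Fout[of x y] n have "\<phi> 0 + ereal (hh (x - 0)) < \<phi> y + ereal (hh (x - y))" by simp
    moreover from y have "\<phi> y + ereal (hh (x - y)) \<le> \<phi> 0 + ereal (hh (x - 0))" using prox_iff by blast
    ultimately show False by simp
  qed
  have valbound: "\<And>x y. y \<in> prox p \<gamma> \<phi> x \<Longrightarrow> \<phi> y \<le> ereal (norm x powr p / (p * \<gamma>))"
  proof -
    fix x y assume y: "y \<in> prox p \<gamma> \<phi> x"
    hence "\<phi> y + ereal (hh (x - y)) \<le> ereal (norm x powr p / (p * \<gamma>))" using prox_iff F0 by metis
    moreover have "\<phi> y \<le> \<phi> y + ereal (hh (x - y))" using hh0[of "x - y"] ninf[of y] by (cases "\<phi> y") auto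
    ultimately show "\<phi> y \<le> ereal (norm x powr p / (p * \<gamma>))" by simp
  qed
  have fin: "\<And>x y. y \<in> prox p \<gamma> \<phi> x \<Longrightarrow> \<phi> y = ereal (real_of_ereal (\<phi> y))"
  proof -
    fix x y assume "y \<in> prox p \<gamma> \<phi> x"
    from valbound[OF this] ninf[of y] show "\<phi> y = ereal (real_of_ereal (\<phi> y))" by (cases "\<phi> y") auto
  qed
  have proxreal: "\<And>x y z. y \<in> prox p \<gamma> \<phi> x \<Longrightarrow> \<phi> z \<noteq> \<infinity> \<Longrightarrow>
      real_of_ereal (\<phi> y) + hh (x - y) \<le> real_of_ereal (\<phi> z) + hh (x - z)"
  proof -
    fix x y z assume y: "y \<in> prox p \<gamma> \<phi> x" and z: "\<phi> z \<noteq> \<infinity>"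
    have "\<phi> y + ereal (hh (x - y)) \<le> \<phi> z + ereal (hh (x - z))" using y prox_iff by blast
    thus "real_of_ereal (\<phi> y) + hh (x - y) \<le> real_of_ereal (\<phi> z) + hh (x - z)"
      using fin[OF y] z ninf[of z] by (cases "\<phi> z"; cases "\<phi> y") auto
  qed
  have fermat: "\<And>x y. y \<in> prox p \<gamma> \<phi> x \<Longrightarrow> (Jp p (x - y) /\<^sub>R \<gamma>) \<in> lim_subdiff \<phi> y"
  proof -
    fix x y assume y: "y \<in> prox p \<gamma> \<phi> x"
    define \<zeta> where "\<zeta> = Jp p (x - y) /\<^sub>R \<gamma>"
    define R where "R = norm (x - y) + 1"
    define Lc where "Lc = (p - 1) * R powr (p - 2) / \<gamma>"
    have Lc0: "Lc \<ge> 0" unfolding Lc_def using hp hg by simp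
    have "\<zeta> \<in> frechet_subdiff \<phi> y"
      unfolding frechet_subdiff_def
    proof (intro CollectI conjI allI impI)
      show "\<bar>\<phi> y\<bar> \<noteq> \<infinity>" by (subst fin[OF y]) simp
      fix e :: real assume e: "e > 0"
      define d where "d = min 1 (e / (Lc + 1))"
      show "\<exists>d>0. \<forall>y'. norm (y' - y) < d \<longrightarrow>
          ereal (real_of_ereal (\<phi> y) + inner \<zeta> (y' - y) - e * norm (y' - y)) \<le> \<phi> y'"
      proof (intro exI[of _ d] conjI allI impI)
        show "d > 0" unfolding d_def using e Lc0 by simp
        fix y' assume y': "norm (y' - y) < d"
        show "ereal (real_of_ereal (\<phi> y) + inner \<zeta> (y' - y) - e * norm (y' - y)) \<le> \<phi> y'"
        proof (cases "\<phi> y' = \<infinity>")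
          case True then show ?thesis by simp
        next
          case False
          have pr: "real_of_ereal (\<phi> y) + hh (x - y) \<le> real_of_ereal (\<phi> y') + hh (x - y')"
            by (rule proxreal[OF y False])
          define a where "a = x - y"
          define b where "b = x - y'"
          define n where "n = norm (y' - y)"
          have n1: "n \<le> 1" "n < d" using y' unfolding n_def d_def by auto
          have tang: "norm b powr p / p + norm b powr (p - 2) * inner b (a - b) \<le> norm a powr p / p"
            by (rule tangent_ineq[OF p1])
          have ab: "a - b = y' - y" unfolding a_def b_def by simp
          have aR: "norm a \<le> R" unfolding R_def a_def by simp
          have "norm b \<le> norm a + norm (b - a)" using norm_triangle_ineq4[of a "a - b"] by (simp add: norm_minus_commute)
          moreover have "norm (b - a) = n" unfolding a_def b_def n_def by (simp add: norm_minus_commute)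
          ultimately have bR: "norm b \<le> R" using n1 unfolding R_def a_def by linarith
          have lip: "norm (Jp p b - Jp p a) \<le> (p - 1) * R powr (p - 2) * n"
            using Jlip[OF hp aR bR] ab unfolding n_def by (simp add: norm_minus_commute)
          have "inner (Jp p b - Jp p a) (y' - y) \<ge> - (norm (Jp p b - Jp p a) * n)"
            using Cauchy_Schwarz_ineq2[of "Jp p b - Jp p a" "y' - y"] unfolding n_def by linarith
          moreover have "norm (Jp p b - Jp p a) * n \<le> (p - 1) * R powr (p - 2) * n * n"
            using mult_right_mono[OF lip, of n] unfolding n_def by simp
          moreover have "inner (Jp p b - Jp p a) (y' - y) = inner (Jp p b) (y' - y) - inner (Jp p a) (y' - y)"
            by (rule inner_diff_left)
          ultimately have ib: "inner (Jp p b) (y' - y) \<ge> inner (Jp p a) (y' - y) - (p - 1) * R powr (p - 2) * n * n"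
            by linarith
          have gL: "\<gamma> * Lc * n * n = (p - 1) * R powr (p - 2) * n * n" unfolding Lc_def using hg by simp
          have "inner (Jp p b) (y' - y) = norm b powr (p - 2) * inner b (a - b)" using ab by (simp add: inner_Jp)
          hence "norm a powr p / p - norm b powr p / p \<ge> inner (Jp p a) (y' - y) - \<gamma> * Lc * n * n"
            using tang ib gL by linarith
          hence "(norm a powr p / p - norm b powr p / p) / \<gamma> \<ge> (inner (Jp p a) (y' - y) - \<gamma> * Lc * n * n) / \<gamma>"
            using hg by (intro divide_right_mono) auto
          moreover have "hh a - hh b = (norm a powr p / p - norm b powr p / p) / \<gamma>"
            unfolding hh_def using hg p0 by (simp add: field_simps)
          moreover have "inner \<zeta> (y' - y) = inner (Jp p a) (y' - y) / \<gamma>"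
            unfolding \<zeta>_def a_def by (simp add: divide_inverse mult.commute)
          moreover have "(inner (Jp p a) (y' - y) - \<gamma> * Lc * n * n) / \<gamma> = inner (Jp p a) (y' - y) / \<gamma> - Lc * n * n"
            using hg by (simp add: field_simps)
          ultimately have "hh a - hh b \<ge> inner \<zeta> (y' - y) - Lc * n * n"
            by linarith
          moreover have "Lc * n \<le> e"
          proof -
            have "Lc * n \<le> Lc * (e / (Lc + 1))" using n1 Lc0 unfolding d_def by (intro mult_left_mono) auto
            also have "\<dots> \<le> e" using Lc0 e by (simp add: field_simps)
            finally show ?thesis .
          qed
          hence "Lc * n * n \<le> e * n" using n_def by (intro mult_right_mono) auto
          ultimately have "real_of_ereal (\<phi> y) + inner \<zeta> (y' - y) - e * n \<le> real_of_ereal (\<phi> y')"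
            using pr unfolding a_def b_def by linarith
          thus ?thesis using False ninf[of y'] unfolding n_def by (cases "\<phi> y'") auto
        qed
      qed
    qed
    thus "\<zeta> \<in> lim_subdiff \<phi> y"
      unfolding lim_subdiff_def by (intro CollectI exI[of _ "\<lambda>k. y"] exI[of _ "\<lambda>k. \<zeta>"]) auto
  qed
  have gr: "(\<gamma> * rho) * 2 powr (p - 1) < 1"
  proof -
    have "\<gamma> * (rho * 2 powr (2 * p - 3)) < 1" using hg2 hrho by (simp add: field_simps)
    moreover have "2 powr (p - 1) \<le> (2::real) powr (2 * p - 3)" using hp by (intro powr_mono) auto
    hence "\<gamma> * rho * 2 powr (p - 1) \<le> \<gamma> * rho * 2 powr (2 * p - 3)" using hg hrho by (intro mult_left_mono) auto
    ultimately show ?thesis by (simp add: mult.assoc)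
  qed
  have grp: "\<gamma> * rho > 0" using hg hrho by simp
  obtain K2 where K2: "K2 \<ge> 0" and K2H: "\<And>(a::'a) b dx dy. norm a \<le> 1/2 \<Longrightarrow> norm b \<le> 1/2 \<Longrightarrow> dy = dx - (b - a) \<Longrightarrow>
            inner (Jp p b - Jp p a) dy \<ge> - ((\<gamma> * rho) * norm dy powr q) \<Longrightarrow> norm (b - a) \<le> K2 * norm dx"
    using holder_core[where 'a='a, OF hp hq grp gr] by blast
  have q2: "1 - 1 / q > 0" using q1 by simp
  have ev: "eventually (\<lambda>d. 0 < d \<and> (K1 + 2) * d powr 1 < min eps (1/2) \<and>
      (K1 powr (p - 1) / \<gamma>) * d powr (p - 1) < eps \<and> (1 / (p * \<gamma>)) * d powr p < eps \<and>
      ((1 + K2) * 2 powr (1 - 1/q)) * d powr (1 - 1/q) < Lp \<and>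
      ((p - 1) * (2 + K2) / \<gamma> * 2 powr (1 - 1/q)) * d powr (1 - 1/q) < LLp) (at_right (0::real))"
  proof (intro eventually_conj)
    show "\<forall>\<^sub>F d in at_right (0::real). 0 < d" using eventually_at_right_less[of "0::real"] by simp
    show "\<forall>\<^sub>F d in at_right (0::real). (K1 + 2) * d powr 1 < min eps (1/2)"
      using K1 eps0 by (intro eventually_small) auto
    show "\<forall>\<^sub>F d in at_right (0::real). (K1 powr (p - 1) / \<gamma>) * d powr (p - 1) < eps"
      using hg p1 eps0 by (intro eventually_small) auto
    show "\<forall>\<^sub>F d in at_right (0::real). (1 / (p * \<gamma>)) * d powr p < eps"
      using hg p0 eps0 by (intro eventually_small) auto
    show "\<forall>\<^sub>F d in at_right (0::real). ((1 + K2) * 2 powr (1 - 1/q)) * d powr (1 - 1/q) < Lp"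
      using K2 q2 hLp by (intro eventually_small) auto
    show "\<forall>\<^sub>F d in at_right (0::real). ((p - 1) * (2 + K2) / \<gamma> * 2 powr (1 - 1/q)) * d powr (1 - 1/q) < LLp"
      using K2 q2 hLLp hg hp by (intro eventually_small) auto
  qed
  obtain d where d0: "0 < d" and dK: "(K1 + 2) * d powr 1 < min eps (1/2)"
    and d2: "(K1 powr (p - 1) / \<gamma>) * d powr (p - 1) < eps" and d3: "(1 / (p * \<gamma>)) * d powr p < eps"
    and d4: "((1 + K2) * 2 powr (1 - 1/q)) * d powr (1 - 1/q) < Lp"
    and d5: "((p - 1) * (2 + K2) / \<gamma> * 2 powr (1 - 1/q)) * d powr (1 - 1/q) < LLp"
    using eventually_happens[OF ev] by auto
  have dK1: "(K1 + 2) * d < eps" "(K1 + 2) * d < 1/2" using dK d0 by auto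
  have dk: "d \<le> K1 * d" using mult_right_mono[OF K1 less_imp_le[OF d0]] by simp
  have e1: "(K1+2)*d = K1*d + 2*d" and e2: "(K1+1)*d = K1*d + d" by (simp_all add: algebra_simps)
  have Kd1: "K1 * d \<le> 1/2" using dK1(2) e1 d0 by linarith
  have Kd2: "(K1 + 1) * d \<le> 1/2" using dK1(2) e1 e2 d0 by linarith
  have Kd3: "d \<le> eps" using dK1(1) e1 d0 dk by linarith
  have Kd4: "(K1 + 1) * d \<le> eps" using dK1(1) e1 e2 d0 by linarith
  have Kd5: "(K1 + 2) * d \<le> 1/2" using dK1(2) by linarith
  note Kd = Kd1 Kd2 Kd3 Kd4 Kd5
  define U where "U = ball (0::'a) d"
  have Uprops: "open U" "0 \<in> U" "U \<subseteq> cball 0 eps" unfolding U_def using d0 Kd by auto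
  have py1: "\<And>x y. x \<in> U \<Longrightarrow> y \<in> prox p \<gamma> \<phi> x \<Longrightarrow> norm (x - y) \<le> K1 * d"
  proof -
    fix x y assume x: "x \<in> U" and y: "y \<in> prox p \<gamma> \<phi> x"
    have "norm (x - y) \<le> K1 * norm x" by (rule loc[OF y])
    also have "\<dots> \<le> K1 * d" using x K1 unfolding U_def by (intro mult_left_mono) auto
    finally show "norm (x - y) \<le> K1 * d" .
  qed
  have py2: "\<And>x y. x \<in> U \<Longrightarrow> y \<in> prox p \<gamma> \<phi> x \<Longrightarrow> norm y \<le> (K1 + 1) * d"
  proof -
    fix x y assume x: "x \<in> U" and y: "y \<in> prox p \<gamma> \<phi> x"
    have "norm y \<le> norm x + norm (x - y)" using norm_triangle_ineq4[of x "x - y"] by simp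
    thus "norm y \<le> (K1 + 1) * d" using py1[OF x y] x unfolding U_def by (simp add: algebra_simps)
  qed
  have regapp: "\<And>x y x'. x \<in> U \<Longrightarrow> y \<in> prox p \<gamma> \<phi> x \<Longrightarrow> x' \<in> cball 0 eps \<Longrightarrow>
      \<phi> x' \<ge> \<phi> y + ereal (inner (Jp p (x - y) /\<^sub>R \<gamma>) (x' - y) - rho / 2 * norm (x' - y) powr q)"
  proof -
    fix x y x' :: 'a assume x: "x \<in> U" and y: "y \<in> prox p \<gamma> \<phi> x" and x': "x' \<in> cball 0 eps"
    have yc: "y \<in> cball 0 eps" using py2[OF x y] Kd by simp
    have "norm (Jp p (x - y) /\<^sub>R \<gamma>) = norm (x - y) powr (p - 1) / \<gamma>"
      using hg by (simp add: norm_Jp divide_inverse mult.commute)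
    also have "\<dots> \<le> (K1 * d) powr (p - 1) / \<gamma>"
      using py1[OF x y] hg hp by (intro divide_right_mono powr_mono2) auto
    also have "\<dots> = (K1 powr (p - 1) / \<gamma>) * d powr (p - 1)" by (simp add: powr_mult)
    finally have "norm (Jp p (x - y) /\<^sub>R \<gamma>) \<le> eps" using d2 by linarith
    hence zc: "Jp p (x - y) /\<^sub>R \<gamma> \<in> cball 0 eps" by simp
    have "norm x powr p / (p * \<gamma>) \<le> d powr p / (p * \<gamma>)"
      using x hg p0 unfolding U_def by (intro divide_right_mono powr_mono2) auto
    hence "norm x powr p / (p * \<gamma>) < eps" using d3 by simp
    hence "\<phi> y < \<phi> 0 + ereal eps" using valbound[OF y] h0 by (simp add: le_less_trans)
    with regI yc fermat[OF y] zc x' show "\<phi> x' \<ge> \<phi> y + ereal (inner (Jp p (x - y) /\<^sub>R \<gamma>) (x' - y) - rho / 2 * norm (x' - y) powr q)" by blast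
  qed
  have inner_sc: "\<And>w v. inner (Jp p w /\<^sub>R \<gamma>) v = inner (Jp p w) v / \<gamma>"
    by (simp add: divide_inverse mult.commute)
  have lipprox: "\<And>x1 x2 y1 y2. x1 \<in> U \<Longrightarrow> x2 \<in> U \<Longrightarrow> y1 \<in> prox p \<gamma> \<phi> x1 \<Longrightarrow> y2 \<in> prox p \<gamma> \<phi> x2 \<Longrightarrow>
      norm (y2 - y1) \<le> (1 + K2) * norm (x2 - x1)"
  proof -
    fix x1 x2 y1 y2 :: 'a
    assume x1: "x1 \<in> U" and x2: "x2 \<in> U" and y1: "y1 \<in> prox p \<gamma> \<phi> x1" and y2: "y2 \<in> prox p \<gamma> \<phi> x2"
    define a where "a = x1 - y1"
    define b where "b = x2 - y2"
    define N where "N = norm (y2 - y1) powr q"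
    have y1c: "y1 \<in> cball 0 eps" using py2[OF x1 y1] Kd by simp
    have y2c: "y2 \<in> cball 0 eps" using py2[OF x2 y2] Kd by simp
    define f1 where "f1 = real_of_ereal (\<phi> y1)"
    define f2 where "f2 = real_of_ereal (\<phi> y2)"
    have f1: "\<phi> y1 = ereal f1" using fin[OF y1] f1_def by simp
    have f2: "\<phi> y2 = ereal f2" using fin[OF y2] f2_def by simp
    have "\<phi> y2 \<ge> \<phi> y1 + ereal (inner (Jp p a /\<^sub>R \<gamma>) (y2 - y1) - rho / 2 * norm (y2 - y1) powr q)"
      unfolding a_def by (rule regapp[OF x1 y1 y2c])
    hence r1: "f2 \<ge> f1 + (inner (Jp p a) (y2 - y1) / \<gamma> - rho / 2 * N)"
      unfolding f1 f2 inner_sc N_def by simp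
    have "\<phi> y1 \<ge> \<phi> y2 + ereal (inner (Jp p b /\<^sub>R \<gamma>) (y1 - y2) - rho / 2 * norm (y1 - y2) powr q)"
      unfolding b_def by (rule regapp[OF x2 y2 y1c])
    moreover have "inner (Jp p b) (y1 - y2) = - inner (Jp p b) (y2 - y1)"
      by (metis inner_minus_right minus_diff_eq)
    ultimately have r2: "f1 \<ge> f2 + (- inner (Jp p b) (y2 - y1) / \<gamma> - rho / 2 * N)"
      unfolding f1 f2 inner_sc N_def by (simp add: norm_minus_commute)
    have "- (rho * N) \<le> (inner (Jp p b) (y2 - y1) - inner (Jp p a) (y2 - y1)) / \<gamma>"
      using r1 r2 by (simp add: diff_divide_distrib)
    hence "- (rho * N) * \<gamma> \<le> inner (Jp p b) (y2 - y1) - inner (Jp p a) (y2 - y1)"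
      using hg by (simp add: pos_le_divide_eq)
    hence mon: "inner (Jp p b - Jp p a) (y2 - y1) \<ge> - ((\<gamma> * rho) * norm (y2 - y1) powr q)"
      unfolding N_def by (simp add: inner_diff_left algebra_simps)
    have na: "norm a \<le> 1/2" unfolding a_def using py1[OF x1 y1] Kd by simp
    have nb: "norm b \<le> 1/2" unfolding b_def using py1[OF x2 y2] Kd by simp
    have dyeq: "y2 - y1 = (x2 - x1) - (b - a)" unfolding a_def b_def by (simp add: algebra_simps)
    have ba: "norm (b - a) \<le> K2 * norm (x2 - x1)" by (rule K2H[OF na nb dyeq mon])
    have "norm (y2 - y1) \<le> norm (x2 - x1) + norm (b - a)" unfolding dyeq by (rule norm_triangle_ineq4)
    thus "norm (y2 - y1) \<le> (1 + K2) * norm (x2 - x1)" using ba by (simp add: algebra_simps)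
  qed
  have env: "\<And>x y. y \<in> prox p \<gamma> \<phi> x \<Longrightarrow> moreau_env p \<gamma> \<phi> x = \<phi> y + ereal (hh (x - y))"
  proof -
    fix x y assume y: "y \<in> prox p \<gamma> \<phi> x"
    have "(INF z. \<phi> z + ereal (hh (x - z))) = \<phi> y + ereal (hh (x - y))"
    proof (rule antisym)
      show "(INF z. \<phi> z + ereal (hh (x - z))) \<le> \<phi> y + ereal (hh (x - y))" by (rule INF_lower) simp
      show "\<phi> y + ereal (hh (x - y)) \<le> (INF z. \<phi> z + ereal (hh (x - z)))"
        using y prox_iff by (intro INF_greatest) blast
    qed
    thus "moreau_env p \<gamma> \<phi> x = \<phi> y + ereal (hh (x - y))" by (simp add: moreau_env_def hh_def)
  qed
  have envreal: "\<And>x y. y \<in> prox p \<gamma> \<phi> x \<Longrightarrow> real_of_ereal (moreau_env p \<gamma> \<phi> x) = real_of_ereal (\<phi> y) + hh (x - y)"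
  proof -
    fix x y assume y: "y \<in> prox p \<gamma> \<phi> x"
    show "real_of_ereal (moreau_env p \<gamma> \<phi> x) = real_of_ereal (\<phi> y) + hh (x - y)"
      unfolding env[OF y] by (subst fin[OF y]) simp
  qed
  have envfin: "\<And>x. \<bar>moreau_env p \<gamma> \<phi> x\<bar> \<noteq> \<infinity>"
  proof -
    fix x obtain y where y: "y \<in> prox p \<gamma> \<phi> x" using exist by blast
    show "\<bar>moreau_env p \<gamma> \<phi> x\<bar> \<noteq> \<infinity>" unfolding env[OF y] by (subst fin[OF y]) simp
  qed
  define ys where "ys x = (SOME y. y \<in> prox p \<gamma> \<phi> x)" for x
  have ysp: "\<And>x. ys x \<in> prox p \<gamma> \<phi> x" unfolding ys_def using exist by (rule someI_ex)
  define g where "g x = Jp p (x - ys x) /\<^sub>R \<gamma>" for x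
  have xdist: "\<And>x1 x2. x1 \<in> U \<Longrightarrow> x2 \<in> U \<Longrightarrow> norm (x2 - x1) \<le> 2 * d"
  proof -
    fix x1 x2 assume "x1 \<in> U" "x2 \<in> U"
    hence "norm x1 < d" "norm x2 < d" unfolding U_def by auto
    thus "norm (x2 - x1) \<le> 2 * d" using norm_triangle_ineq4[of x2 x1] by linarith
  qed
  have powr2d: "(2 * d) powr (1 - 1/q) = 2 powr (1 - 1/q) * d powr (1 - 1/q)" by (rule powr_mult)
  have holdprox: "\<forall>x1\<in>U. \<forall>x2\<in>U. \<forall>y1\<in>prox p \<gamma> \<phi> x1. \<forall>y2\<in>prox p \<gamma> \<phi> x2.
              norm (y2 - y1) \<le> Lp * norm (x2 - x1) powr (1 / q)"
  proof (intro ballI)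
    fix x1 x2 y1 y2 assume x1: "x1 \<in> U" and x2: "x2 \<in> U" and y1: "y1 \<in> prox p \<gamma> \<phi> x1" and y2: "y2 \<in> prox p \<gamma> \<phi> x2"
    show "norm (y2 - y1) \<le> Lp * norm (x2 - x1) powr (1 / q)"
    proof (rule holder_finish[OF lipprox[OF x1 x2 y1 y2] _ _ xdist[OF x1 x2] _ q1])
      show "0 \<le> 1 + K2" using K2 by simp
      show "0 \<le> norm (x2 - x1)" by simp
      show "(1 + K2) * (2 * d) powr (1 - 1 / q) \<le> Lp" using d4 unfolding powr2d by (simp add: mult.assoc)
    qed
  qed
  have holdg: "\<forall>x1\<in>U. \<forall>x2\<in>U. norm (g x2 - g x1) \<le> LLp * norm (x2 - x1) powr (1 / q)"
  proof (intro ballI)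
    fix x1 x2 assume x1: "x1 \<in> U" and x2: "x2 \<in> U"
    define a where "a = x1 - ys x1"
    define b where "b = x2 - ys x2"
    have na: "norm a \<le> 1" unfolding a_def using py1[OF x1 ysp] Kd by simp
    have nb: "norm b \<le> 1" unfolding b_def using py1[OF x2 ysp] Kd by simp
    have "norm (b - a) \<le> norm (x2 - x1) + norm (ys x2 - ys x1)"
    proof -
      have "b - a = (x2 - x1) - (ys x2 - ys x1)" unfolding a_def b_def by (simp add: algebra_simps)
      thus ?thesis by (metis norm_triangle_ineq4)
    qed
    also have "\<dots> \<le> norm (x2 - x1) + (1 + K2) * norm (x2 - x1)" using lipprox[OF x1 x2 ysp ysp] by simp
    finally have ba: "norm (b - a) \<le> (2 + K2) * norm (x2 - x1)" by (simp add: algebra_simps)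
    have "norm (g x2 - g x1) = norm (Jp p b - Jp p a) / \<gamma>"
      unfolding g_def a_def b_def using hg by (simp flip: scaleR_diff_right add: divide_inverse mult.commute)
    also have "\<dots> \<le> (p - 1) * 1 powr (p - 2) * norm (b - a) / \<gamma>"
      using Jlip[OF hp na nb] hg by (intro divide_right_mono) auto
    also have "\<dots> \<le> (p - 1) * ((2 + K2) * norm (x2 - x1)) / \<gamma>"
      using ba hp hg by (intro divide_right_mono mult_left_mono) auto
    finally have gb: "norm (g x2 - g x1) \<le> (p - 1) * (2 + K2) / \<gamma> * norm (x2 - x1)" by simp
    show "norm (g x2 - g x1) \<le> LLp * norm (x2 - x1) powr (1 / q)"
    proof (rule holder_finish[OF gb _ _ xdist[OF x1 x2] _ q1])
      show "0 \<le> (p - 1) * (2 + K2) / \<gamma>" using K2 hp hg by simp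
      show "0 \<le> norm (x2 - x1)" by simp
      show "(p - 1) * (2 + K2) / \<gamma> * (2 * d) powr (1 - 1 / q) \<le> LLp" using d5 unfolding powr2d by (simp add: mult.assoc)
    qed
  qed
  have gder: "\<forall>x\<in>U. GDERIV (\<lambda>z. real_of_ereal (moreau_env p \<gamma> \<phi> z)) x :> g x"
  proof
    fix x assume x: "x \<in> U"
    define C where "C = (p - 1) * (1 + K2) / \<gamma>"
    have C0: "C \<ge> 0" unfolding C_def using hp K2 hg by simp
    have r0: "d - norm x > 0" using x unfolding U_def by simp
    show "GDERIV (\<lambda>z. real_of_ereal (moreau_env p \<gamma> \<phi> z)) x :> g x"
    proof (rule deriv_quadratic[OF r0 C0])
      fix z assume zx: "norm (z - x) < d - norm x"
      have z: "z \<in> U" unfolding U_def using zx norm_triangle_ineq2[of z x] by simp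
      define y where "y = ys x"
      define y' where "y' = ys z"
      have y: "y \<in> prox p \<gamma> \<phi> x" and y': "y' \<in> prox p \<gamma> \<phi> z" unfolding y_def y'_def by (rule ysp)+
      define v where "v = z - x"
      define T where "T w = norm w powr p / p" for w :: 'a
      have hhT: "\<And>w. \<gamma> * hh w = T w" unfolding hh_def T_def using hg by simp
      have ez: "real_of_ereal (moreau_env p \<gamma> \<phi> z) = real_of_ereal (\<phi> y') + hh (z - y')" by (rule envreal[OF y'])
      have ex: "real_of_ereal (moreau_env p \<gamma> \<phi> x) = real_of_ereal (\<phi> y) + hh (x - y)" by (rule envreal[OF y])
      have ninfy: "\<phi> y \<noteq> \<infinity>" by (subst fin[OF y]) simp
      have ninfy': "\<phi> y' \<noteq> \<infinity>" by (subst fin[OF y']) simp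
      have up: "real_of_ereal (\<phi> y') + hh (z - y') \<le> real_of_ereal (\<phi> y) + hh (z - y)" by (rule proxreal[OF y' ninfy])
      have lo: "real_of_ereal (\<phi> y) + hh (x - y) \<le> real_of_ereal (\<phi> y') + hh (x - y')" by (rule proxreal[OF y ninfy'])
      have t1: "T (z - y) + norm (z - y) powr (p - 2) * inner (z - y) ((x - y) - (z - y)) \<le> T (x - y)"
        unfolding T_def by (rule tangent_ineq[OF p1])
      have t2: "T (x - y') + norm (x - y') powr (p - 2) * inner (x - y') ((z - y') - (x - y')) \<le> T (z - y')"
        unfolding T_def by (rule tangent_ineq[OF p1])
      have e1: "norm (z - y) powr (p - 2) * inner (z - y) ((x - y) - (z - y)) = - inner (Jp p (z - y)) v"
        unfolding v_def inner_Jp by (simp add: inner_diff_right algebra_simps)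
      have e2: "norm (x - y') powr (p - 2) * inner (x - y') ((z - y') - (x - y')) = inner (Jp p (x - y')) v"
        unfolding v_def inner_Jp by (simp add: inner_diff_right)
      have nz: "norm z < d" using z unfolding U_def by simp
      have nx: "norm x < d" using x unfolding U_def by simp
      have bnd1: "norm (z - y) \<le> 1"
      proof -
        have "norm (z - y) \<le> norm z + norm y" by (rule norm_triangle_ineq4)
        thus ?thesis using nz py2[OF x y] Kd(5) by (simp add: algebra_simps)
      qed
      have bnd2: "norm (x - y) \<le> 1" using py1[OF x y] Kd by simp
      have bnd3: "norm (x - y') \<le> 1"
      proof -
        have "norm (x - y') \<le> norm x + norm y'" by (rule norm_triangle_ineq4)
        thus ?thesis using nx py2[OF z y'] Kd(5) by (simp add: algebra_simps)
      qed
      have l1: "norm (Jp p (z - y) - Jp p (x - y)) \<le> (p - 1) * norm v"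
        using Jlip[OF hp bnd2 bnd1] unfolding v_def by simp
      have l2: "norm (Jp p (x - y') - Jp p (x - y)) \<le> (p - 1) * ((1 + K2) * norm v)"
      proof -
        have "norm (Jp p (x - y') - Jp p (x - y)) \<le> (p - 1) * 1 powr (p - 2) * norm ((x - y') - (x - y))"
          by (rule Jlip[OF hp bnd2 bnd3])
        also have "norm ((x - y') - (x - y)) = norm (y' - y)" by (simp add: norm_minus_commute)
        also have "norm (y' - y) \<le> (1 + K2) * norm v" unfolding v_def by (rule lipprox[OF x z y y'])
        finally show ?thesis using hp by (simp add: mult_left_mono)
      qed
      define Ia where "Ia = inner (Jp p (x - y)) v"
      have c1': "inner (Jp p (z - y)) v \<le> Ia + (p - 1) * norm v * norm v"
      proof -
        have "inner (Jp p (z - y) - Jp p (x - y)) v \<le> norm (Jp p (z - y) - Jp p (x - y)) * norm v"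
          by (rule norm_cauchy_schwarz)
        also have "\<dots> \<le> (p - 1) * norm v * norm v" using l1 by (intro mult_right_mono) auto
        finally show ?thesis unfolding Ia_def by (simp add: inner_diff_left)
      qed
      have c2': "inner (Jp p (x - y')) v \<ge> Ia - (p - 1) * (1 + K2) * norm v * norm v"
      proof -
        have "- inner (Jp p (x - y') - Jp p (x - y)) v \<le> norm (Jp p (x - y') - Jp p (x - y)) * norm v"
          using Cauchy_Schwarz_ineq2[of "Jp p (x - y') - Jp p (x - y)" v] by linarith
        also have "\<dots> \<le> (p - 1) * ((1 + K2) * norm v) * norm v" using l2 by (intro mult_right_mono) auto
        finally show ?thesis unfolding Ia_def by (simp add: inner_diff_left algebra_simps)
      qed
      define D where "D = real_of_ereal (moreau_env p \<gamma> \<phi> z) - real_of_ereal (moreau_env p \<gamma> \<phi> x)"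
      have Dup: "D \<le> hh (z - y) - hh (x - y)" unfolding D_def ez ex using up by linarith
      have Dlo: "D \<ge> hh (z - y') - hh (x - y')" unfolding D_def ez ex using lo by linarith
      have "\<gamma> * D \<le> T (z - y) - T (x - y)" using mult_left_mono[OF Dup, of \<gamma>] hg hhT by (simp add: right_diff_distrib)
      hence gDu: "\<gamma> * D \<le> Ia + (p - 1) * (1 + K2) * norm v * norm v"
      proof -
        have "(p - 1) * norm v * norm v \<le> (p - 1) * (1 + K2) * norm v * norm v"
          using hp K2 by (intro mult_right_mono) (auto simp: mult_le_cancel_left1)
        thus ?thesis using \<open>\<gamma> * D \<le> T (z - y) - T (x - y)\<close> t1 e1 c1' by linarith
      qed
      have "\<gamma> * D \<ge> T (z - y') - T (x - y')" using mult_left_mono[OF Dlo, of \<gamma>] hg hhT by (simp add: right_diff_distrib)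
      hence gDl: "\<gamma> * D \<ge> Ia - (p - 1) * (1 + K2) * norm v * norm v" using t2 e2 c2' by linarith
      have ig: "inner (z - x) (g x) = Ia / \<gamma>"
        unfolding g_def Ia_def v_def y_def by (simp add: inner_commute divide_inverse mult.commute)
      have "\<bar>\<gamma> * D - Ia\<bar> \<le> (p - 1) * (1 + K2) * norm v * norm v" using gDu gDl by linarith
      hence "\<bar>\<gamma> * (D - Ia / \<gamma>)\<bar> \<le> \<gamma> * (C * norm v ^ 2)"
        unfolding C_def using hg by (simp add: right_diff_distrib power2_eq_square)
      hence "\<gamma> * \<bar>D - Ia / \<gamma>\<bar> \<le> \<gamma> * (C * norm v ^ 2)" using hg by (simp add: abs_mult)
      hence "\<bar>D - Ia / \<gamma>\<bar> \<le> C * norm v ^ 2" using hg by simp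
      thus "\<bar>real_of_ereal (moreau_env p \<gamma> \<phi> z) - real_of_ereal (moreau_env p \<gamma> \<phi> x) - inner (z - x) (g x)\<bar>
          \<le> C * norm (z - x) ^ 2" unfolding ig D_def v_def by simp
    qed
  qed
  show ?thesis
  proof (intro exI[of _ U] conjI)
    show "open U" "0 \<in> U" "U \<subseteq> cball 0 eps" by (rule Uprops)+
    show "\<forall>x\<in>U. prox p \<gamma> \<phi> x \<noteq> {}" using exist by blast
    show "\<forall>x\<in>U. \<bar>moreau_env p \<gamma> \<phi> x\<bar> \<noteq> \<infinity>" by (intro ballI envfin)
    show "\<forall>x1\<in>U. \<forall>x2\<in>U. \<forall>y1\<in>prox p \<gamma> \<phi> x1. \<forall>y2\<in>prox p \<gamma> \<phi> x2.
              norm (y2 - y1) \<le> Lp * norm (x2 - x1) powr (1 / q)" by (rule holdprox)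
    show "\<exists>g. (\<forall>x\<in>U. GDERIV (\<lambda>z. real_of_ereal (moreau_env p \<gamma> \<phi> z)) x :> g x) \<and>
               (\<forall>x1\<in>U. \<forall>x2\<in>U. norm (g x2 - g x1) \<le> LLp * norm (x2 - x1) powr (1 / q))"
      by (intro exI[of _ g] conjI gder holdg)
  qed
qed

theorem theorem8:
  fixes \<phi> :: "'a::euclidean_space \<Rightarrow> ereal"
    and p q M eps rho :: real
  assumes hp: "p \<ge> 2"
    and hproper: "proper_fun \<phi>"
    and hlsc: "lsc_fun \<phi>"
    and hM: "M > 0"
    and hcalm: "p_calm p M \<phi> 0"
    and h0: "\<phi> 0 = 0"
    and hq: "q \<ge> p"
    and hsub: "0 \<in> lim_subdiff \<phi> 0"
    and hreg: "q_prox_regular q \<phi> 0 0 eps rho"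
    and heps: "eps < 1 / 2"
    and hrho: "rho > 0"
  shows "\<forall>\<gamma>. 0 < \<gamma> \<and> \<gamma> < min (2 powr (1 - p) / (M * p)) (1 / (rho * 2 powr (2 * p - 3))) \<longrightarrow>
    (let s = p / (p - 1);
         Lp = (2 * (1 + 2 powr p / kappa s) * eps powr (p - 1)
                / (1 / 2 powr (2 * p - 3) - \<gamma> * rho)) powr (1 / q);
         LLp = 2 * (2 * eps) powr (p - 2) / (\<gamma> * kappa s)
                * ((2 * eps) powr ((q - 1) / q) + Lp)
     in \<exists>U. open U \<and> 0 \<in> U \<and> U \<subseteq> cball 0 eps \<and>
          (\<forall>x\<in>U. prox p \<gamma> \<phi> x \<noteq> {}) \<and>
          (\<forall>x1\<in>U. \<forall>x2\<in>U. \<forall>y1\<in>prox p \<gamma> \<phi> x1. \<forall>y2\<in>prox p \<gamma> \<phi> x2.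
              norm (y2 - y1) \<le> Lp * norm (x2 - x1) powr (1 / q)) \<and>
          (\<forall>x\<in>U. \<bar>moreau_env p \<gamma> \<phi> x\<bar> \<noteq> \<infinity>) \<and>
          (\<exists>g. (\<forall>x\<in>U. GDERIV (\<lambda>z. real_of_ereal (moreau_env p \<gamma> \<phi> z)) x :> g x) \<and>
               (\<forall>x1\<in>U. \<forall>x2\<in>U. norm (g x2 - g x1) \<le> LLp * norm (x2 - x1) powr (1 / q))))"
  proof (intro allI impI)
  fix \<gamma> :: real
  assume hga: "0 < \<gamma> \<and> \<gamma> < min (2 powr (1 - p) / (M * p)) (1 / (rho * 2 powr (2 * p - 3)))"
  hence hg: "0 < \<gamma>" and hg1: "\<gamma> < 2 powr (1 - p) / (M * p)" and hg2: "\<gamma> < 1 / (rho * 2 powr (2 * p - 3))"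
    by auto
  have eps0: "eps > 0" using hreg unfolding q_prox_regular_def by simp
  define s where "s = p / (p - 1)"
  have s1: "1 < s" "s \<le> 2" unfolding s_def using hp by (auto simp: field_simps)
  have ks: "kappa s > 0" by (rule kappa_pos[OF s1])
  define Lp where "Lp = (2 * (1 + 2 powr p / kappa s) * eps powr (p - 1)
                / (1 / 2 powr (2 * p - 3) - \<gamma> * rho)) powr (1 / q)"
  define LLp where "LLp = 2 * (2 * eps) powr (p - 2) / (\<gamma> * kappa s)
                * ((2 * eps) powr ((q - 1) / q) + Lp)"
  have den: "1 / 2 powr (2 * p - 3) - \<gamma> * rho > 0"
  proof -
    have "\<gamma> * (rho * 2 powr (2 * p - 3)) < 1" using hg2 hrho by (simp add: field_simps)
    thus ?thesis using hrho by (simp add: field_simps)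
  qed
  have "2 * (1 + 2 powr p / kappa s) * eps powr (p - 1) / (1 / 2 powr (2 * p - 3) - \<gamma> * rho) > 0"
    using ks eps0 den by (intro divide_pos_pos mult_pos_pos) (auto intro: add_pos_nonneg)
  hence "2 * (1 + 2 powr p / kappa s) * eps powr (p - 1) / (1 / 2 powr (2 * p - 3) - \<gamma> * rho) \<noteq> 0"
    by linarith
  hence Lp0: "Lp > 0" unfolding Lp_def using powr_gt_zero by blast
  have "2 * (2 * eps) powr (p - 2) / (\<gamma> * kappa s) > 0" using eps0 hg ks by simp
  moreover have "(2 * eps) powr ((q - 1) / q) + Lp > 0" using Lp0 by (simp add: add_nonneg_pos)
  ultimately have LLp0: "LLp > 0" unfolding LLp_def by (rule mult_pos_pos)
  have main: "\<exists>U. open U \<and> 0 \<in> U \<and> U \<subseteq> cball 0 eps \<and>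
          (\<forall>x\<in>U. prox p \<gamma> \<phi> x \<noteq> {}) \<and>
          (\<forall>x1\<in>U. \<forall>x2\<in>U. \<forall>y1\<in>prox p \<gamma> \<phi> x1. \<forall>y2\<in>prox p \<gamma> \<phi> x2.
              norm (y2 - y1) \<le> Lp * norm (x2 - x1) powr (1 / q)) \<and>
          (\<forall>x\<in>U. \<bar>moreau_env p \<gamma> \<phi> x\<bar> \<noteq> \<infinity>) \<and>
          (\<exists>g. (\<forall>x\<in>U. GDERIV (\<lambda>z. real_of_ereal (moreau_env p \<gamma> \<phi> z)) x :> g x) \<and>
               (\<forall>x1\<in>U. \<forall>x2\<in>U. norm (g x2 - g x1) \<le> LLp * norm (x2 - x1) powr (1 / q)))"
    by (rule main_lemma[OF hp hproper hlsc hM hcalm h0 hq hreg hrho hg hg1 hg2 Lp0 LLp0])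
  show "let s = p / (p - 1);
         Lp = (2 * (1 + 2 powr p / kappa s) * eps powr (p - 1)
                / (1 / 2 powr (2 * p - 3) - \<gamma> * rho)) powr (1 / q);
         LLp = 2 * (2 * eps) powr (p - 2) / (\<gamma> * kappa s)
                * ((2 * eps) powr ((q - 1) / q) + Lp)
     in \<exists>U. open U \<and> 0 \<in> U \<and> U \<subseteq> cball 0 eps \<and>
          (\<forall>x\<in>U. prox p \<gamma> \<phi> x \<noteq> {}) \<and>
          (\<forall>x1\<in>U. \<forall>x2\<in>U. \<forall>y1\<in>prox p \<gamma> \<phi> x1. \<forall>y2\<in>prox p \<gamma> \<phi> x2.
              norm (y2 - y1) \<le> Lp * norm (x2 - x1) powr (1 / q)) \<and>
          (\<forall>x\<in>U. \<bar>moreau_env p \<gamma> \<phi> x\<bar> \<noteq> \<infinity>) \<and>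
          (\<exists>g. (\<forall>x\<in>U. GDERIV (\<lambda>z. real_of_ereal (moreau_env p \<gamma> \<phi> z)) x :> g x) \<and>
               (\<forall>x1\<in>U. \<forall>x2\<in>U. norm (g x2 - g x1) \<le> LLp * norm (x2 - x1) powr (1 / q)))"
    unfolding Let_def s_def[symmetric] Lp_def[symmetric] LLp_def[symmetric] by (rule main)
qed

end
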